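(* For every cell $\eta\in\Delta_k$ there is a unique cell $\eta'\in\Delta_{n-k}$ with $\mathsf{t}(\eta')=\mathsf{h}(\eta)$, $\mathsf{h}(\eta')=\mathsf{t}(\eta)$ and $x^{\operatorname{div}(\eta')}=x_1x_2\cdots x_n/x^{\operatorname{div}(\eta)}$, and the map $\tau:\Delta\to\Delta$, $\eta\mapsto\eta'$, is an involution.
   Context: $\mathbb{k}$ is an algebraically closed field, $G\subset\operatorname{SL}(n,\mathbb{k})$ a finite abelian group of diagonal matrices with $\operatorname{char}\mathbb{k}\nmid|G|$, $\rho_i\in G^*$ the $i$-th diagonal entry. Let $\deg:\mathbb{Z}^n\to G^*$, $\chi_i\mapsto\rho_i$, $M=\ker\deg$, $\mathbb{T}^n=\mathbb{R}^n/M$. For $u\in\mathbb{Z}^n$ and $S\subseteq\{1,\dots,n\}$ let $F(u,S)=\{u+\sum_{i\in S}\lambda_i\chi_i:0\le\lambda_i\le1\}$. The toric cell complex $\Delta$ is the set of images in $\mathbb{T}^n$ of the sets $F(u,S)$; $\Delta_k$ consists of those with $|S|=k$. For $\eta$ the image of $F(u,S)$: tail $\mathsf{t}(\eta)=\deg u\in G^*$, head $\mathsf{h}(\eta)=\deg(u+\sum_{i\in S}\chi_i)\in G^*$, label $\operatorname{div}(\eta)=\sum_{i\in S}\chi_i$, $x^{\operatorname{div}(\eta)}=\prod_{i\in S}x_i$. *)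

theory Defs
  imports Complex_Main "HOL-Computational_Algebra.Polynomial" "HOL-Library.FuncSet"
begin

text \<open>The index set {1..n} is a finite type 'n (n = CARD('n)).
  A diagonal matrix is represented by its diagonal g :: 'n => 'k, so G is a
  set of diagonals. A character of G is a function G -> 'k (restricted to G,
  undefined outside); the group G* carries pointwise multiplication.
  rho_i is the character g |-> g i.\<close>

definition diag_group :: "('n::finite \<Rightarrow> 'k::field) set \<Rightarrow> bool" where
  "diag_group G \<longleftrightarrow> finite G \<and> (\<lambda>i. 1) \<in> G
     \<and> (\<forall>g\<in>G. \<forall>h\<in>G. (\<lambda>i. g i * h i) \<in> G)
     \<and> (\<forall>g\<in>G. (\<forall>i. g i \<noteq> 0) \<and> (\<lambda>i. inverse (g i)) \<in> G)"

text \<open>Membership in SL(n,k): determinant of a diagonal matrix is the product of the diagonal.\<close>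
definition in_SL :: "('n::finite \<Rightarrow> 'k::field) set \<Rightarrow> bool" where
  "in_SL G \<longleftrightarrow> (\<forall>g\<in>G. (\<Prod>i\<in>UNIV. g i) = 1)"

definition rho :: "('n::finite \<Rightarrow> 'k::field) set \<Rightarrow> 'n \<Rightarrow> ('n \<Rightarrow> 'k) \<Rightarrow> 'k" where
  "rho G i = restrict (\<lambda>g. g i) G"

definition deg :: "('n::finite \<Rightarrow> 'k::field) set \<Rightarrow> ('n \<Rightarrow> int) \<Rightarrow> ('n \<Rightarrow> 'k) \<Rightarrow> 'k" where
  "deg G u = restrict (\<lambda>g. \<Prod>i\<in>UNIV. g i powi u i) G"

definition kerM :: "('n::finite \<Rightarrow> 'k::field) set \<Rightarrow> ('n \<Rightarrow> int) set" where
  "kerM G = {m. deg G m = deg G (\<lambda>i. 0)}"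

text \<open>A point of the torus R^n / M, represented as the coset x + M.\<close>
definition torus_pt :: "('n::finite \<Rightarrow> 'k::field) set \<Rightarrow> ('n \<Rightarrow> real) \<Rightarrow> ('n \<Rightarrow> real) set" where
  "torus_pt G x = {y. \<exists>m\<in>kerM G. y = (\<lambda>i. x i + of_int (m i))}"

definition chiS :: "'n set \<Rightarrow> 'n \<Rightarrow> int" where
  "chiS S = (\<lambda>i. if i \<in> S then 1 else 0)"

definition Fcube :: "('n \<Rightarrow> int) \<Rightarrow> 'n set \<Rightarrow> ('n \<Rightarrow> real) set" where
  "Fcube u S = {(\<lambda>i. of_int (u i) + (if i \<in> S then lam i else 0)) | lam.
                  \<forall>i\<in>S. 0 \<le> lam i \<and> lam i \<le> 1}"

definition cell :: "('n::finite \<Rightarrow> 'k::field) set \<Rightarrow> ('n \<Rightarrow> int) \<Rightarrow> 'n set \<Rightarrow> ('n \<Rightarrow> real) set set" where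
  "cell G u S = torus_pt G ` Fcube u S"

definition Delta :: "('n::finite \<Rightarrow> 'k::field) set \<Rightarrow> ('n \<Rightarrow> real) set set set" where
  "Delta G = {cell G u S | u S. True}"

definition Delta_k :: "('n::finite \<Rightarrow> 'k::field) set \<Rightarrow> nat \<Rightarrow> ('n \<Rightarrow> real) set set set" where
  "Delta_k G k = {cell G u S | u S. card S = k}"

definition rep :: "('n::finite \<Rightarrow> 'k::field) set \<Rightarrow> ('n \<Rightarrow> real) set set \<Rightarrow> ('n \<Rightarrow> int) \<times> 'n set" where
  "rep G \<eta> = (SOME p. \<eta> = cell G (fst p) (snd p))"

definition tail :: "('n::finite \<Rightarrow> 'k::field) set \<Rightarrow> ('n \<Rightarrow> real) set set \<Rightarrow> ('n \<Rightarrow> 'k) \<Rightarrow> 'k" where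
  "tail G \<eta> = deg G (fst (rep G \<eta>))"

definition head :: "('n::finite \<Rightarrow> 'k::field) set \<Rightarrow> ('n \<Rightarrow> real) set set \<Rightarrow> ('n \<Rightarrow> 'k) \<Rightarrow> 'k" where
  "head G \<eta> = deg G (\<lambda>i. fst (rep G \<eta>) i + chiS (snd (rep G \<eta>)) i)"

text \<open>div(eta) = sum_{i in S} chi_i; the monomial x^div(eta) is determined by this exponent vector.\<close>
definition cdiv :: "('n::finite \<Rightarrow> 'k::field) set \<Rightarrow> ('n \<Rightarrow> real) set set \<Rightarrow> 'n \<Rightarrow> int" where
  "cdiv G \<eta> = chiS (snd (rep G \<eta>))"

definition tau :: "('n::finite \<Rightarrow> 'k::field) set \<Rightarrow> ('n \<Rightarrow> real) set set \<Rightarrow> ('n \<Rightarrow> real) set set" where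
  "tau G \<eta> = (THE \<eta>'. \<eta>' \<in> Delta G \<and> tail G \<eta>' = head G \<eta> \<and> head G \<eta>' = tail G \<eta>
                      \<and> cdiv G \<eta>' = (\<lambda>i. 1 - cdiv G \<eta> i))"

end

theory Submission
  imports Defs
begin

definition pp :: "('n::finite \<Rightarrow> 'k::field) \<Rightarrow> ('n \<Rightarrow> int) \<Rightarrow> 'k" where
  "pp g u = (\<Prod>i\<in>UNIV. g i powi u i)"

lemma pp_add: "(\<forall>i. g i \<noteq> 0) \<Longrightarrow> pp g (\<lambda>i. u i + v i) = pp g u * pp g v"
  by (simp add: pp_def power_int_add prod.distrib)

lemma pp_nz: "(\<forall>i. g i \<noteq> 0) \<Longrightarrow> pp g u \<noteq> 0"
  by (simp add: pp_def)

lemma pp_zero: "pp g (\<lambda>i. 0) = 1"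
  by (simp add: pp_def)

lemma deg_eq_iff: "deg G u = deg G v \<longleftrightarrow> (\<forall>g\<in>G. pp g u = pp g v)"
  by (auto simp: deg_def pp_def restrict_def fun_eq_iff)

lemma kerM_iff: "m \<in> kerM G \<longleftrightarrow> (\<forall>g\<in>G. pp g m = 1)"
  by (simp add: kerM_def deg_eq_iff pp_zero)

lemma nz: "diag_group G \<Longrightarrow> g \<in> G \<Longrightarrow> \<forall>i. g i \<noteq> 0"
  by (simp add: diag_group_def)

lemma deg_eq_ker:
  assumes "diag_group G"
  shows "deg G u = deg G v \<longleftrightarrow> (\<lambda>i. u i - v i) \<in> kerM G"
proof -
  have "pp g u = pp g (\<lambda>i. u i - v i) * pp g v" if "g \<in> G" for g
    using pp_add[OF nz[OF assms that], of "\<lambda>i. u i - v i" v] by simp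
  moreover have "pp g v \<noteq> 0" if "g \<in> G" for g using pp_nz[OF nz[OF assms that]] .
  ultimately have "(\<forall>g\<in>G. pp g u = pp g v) \<longleftrightarrow> (\<forall>g\<in>G. pp g (\<lambda>i. u i - v i) = 1)"
    by (metis mult_cancel_right2 mult_1)
  thus ?thesis unfolding deg_eq_iff kerM_iff .
qed

lemma ker_add: "diag_group G \<Longrightarrow> a \<in> kerM G \<Longrightarrow> b \<in> kerM G \<Longrightarrow> (\<lambda>i. a i + b i) \<in> kerM G"
  by (simp add: kerM_iff pp_add nz)

lemma ker_diff: "diag_group G \<Longrightarrow> a \<in> kerM G \<Longrightarrow> b \<in> kerM G \<Longrightarrow> (\<lambda>i. a i - b i) \<in> kerM G"
  using deg_eq_ker[of G a b] by (simp add: kerM_def)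

lemma ker_zero: "(\<lambda>i. 0) \<in> kerM G"
  by (simp add: kerM_def)

lemma torus_shift:
  assumes "diag_group G" "m \<in> kerM G"
  shows "torus_pt G (\<lambda>i. x i + of_int (m i)) = torus_pt G x"
proof
  show "torus_pt G (\<lambda>i. x i + of_int (m i)) \<subseteq> torus_pt G x"
  proof
    fix y assume "y \<in> torus_pt G (\<lambda>i. x i + of_int (m i))"
    then obtain m' where m': "m' \<in> kerM G" "y = (\<lambda>i. x i + of_int (m i) + of_int (m' i))"
      by (auto simp: torus_pt_def)
    have k: "(\<lambda>i. m i + m' i) \<in> kerM G" using ker_add assms m' by blast
    have y: "y = (\<lambda>i. x i + of_int (m i + m' i))" using m' by (simp add: add.assoc)
    show "y \<in> torus_pt G x" unfolding torus_pt_def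
      by (rule CollectI, rule bexI[OF _ k]) (simp add: y)
  qed
next
  show "torus_pt G x \<subseteq> torus_pt G (\<lambda>i. x i + of_int (m i))"
  proof
    fix y assume "y \<in> torus_pt G x"
    then obtain m' where m': "m' \<in> kerM G" "y = (\<lambda>i. x i + of_int (m' i))"
      by (auto simp: torus_pt_def)
    have k: "(\<lambda>i. m' i - m i) \<in> kerM G" using ker_diff assms m' by blast
    have y: "y = (\<lambda>i. x i + of_int (m i) + of_int (m' i - m i))" using m' by simp
    show "y \<in> torus_pt G (\<lambda>i. x i + of_int (m i))" unfolding torus_pt_def
      by (rule CollectI, rule bexI[OF _ k]) (simp add: y)
  qed
qed

lemma cell_shift:
  assumes "diag_group G" "m \<in> kerM G"
  shows "cell G (\<lambda>i. u i + m i) S = cell G u S"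
proof -
  have e: "torus_pt G (\<lambda>i. of_int (u i + m i) + f i) = torus_pt G (\<lambda>i. of_int (u i) + f i)" for f
    using torus_shift[OF assms, of "\<lambda>i. of_int (u i) + f i"]
    by (simp add: add.commute add.left_commute)
  show ?thesis
  proof
    show "cell G (\<lambda>i. u i + m i) S \<subseteq> cell G u S"
    proof
      fix z assume "z \<in> cell G (\<lambda>i. u i + m i) S"
      then obtain lam where l: "\<forall>i\<in>S. 0 \<le> lam i \<and> lam i \<le> 1"
        "z = torus_pt G (\<lambda>i. of_int (u i + m i) + (if i \<in> S then lam i else 0))"
        unfolding cell_def Fcube_def by auto
      have fc: "(\<lambda>i. of_int (u i) + (if i \<in> S then lam i else 0)) \<in> Fcube u S"
        unfolding Fcube_def using l(1) by blast
      have z2: "z = torus_pt G (\<lambda>i. of_int (u i) + (if i \<in> S then lam i else 0))"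
        using l(2) e by simp
      show "z \<in> cell G u S" unfolding cell_def by (rule image_eqI[where f="torus_pt G", OF z2 fc])
    qed
  next
    show "cell G u S \<subseteq> cell G (\<lambda>i. u i + m i) S"
    proof
      fix z assume "z \<in> cell G u S"
      then obtain lam where l: "\<forall>i\<in>S. 0 \<le> lam i \<and> lam i \<le> 1"
        "z = torus_pt G (\<lambda>i. of_int (u i) + (if i \<in> S then lam i else 0))"
        unfolding cell_def Fcube_def by auto
      have fc: "(\<lambda>i. of_int (u i + m i) + (if i \<in> S then lam i else 0)) \<in> Fcube (\<lambda>i. u i + m i) S"
        unfolding Fcube_def using l(1) by blast
      have z2: "z = torus_pt G (\<lambda>i. of_int (u i + m i) + (if i \<in> S then lam i else 0))"
        using l(2) e by simp
      show "z \<in> cell G (\<lambda>i. u i + m i) S" unfolding cell_def by (rule image_eqI[where f="torus_pt G", OF z2 fc])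
    qed
  qed
qed

lemma self_in_torus: "x \<in> torus_pt G x"
  unfolding torus_pt_def by (rule CollectI, rule bexI[OF _ ker_zero]) simp

lemma half_lemma:
  assumes "cell G u S = cell G u' S'"
  shows "S' \<subseteq> S \<and> (S = S' \<longrightarrow> (\<lambda>i. u' i - u i) \<in> kerM G)"
proof -
  define p where "p = (\<lambda>i. of_int (u' i) + (if i \<in> S' then (1/2::real) else 0))"
  have "p \<in> Fcube u' S'" unfolding Fcube_def p_def
    by (rule CollectI, rule exI[of _ "\<lambda>i. 1/2"]) auto
  hence "torus_pt G p \<in> cell G u S" using assms by (auto simp: cell_def)
  then obtain q where q: "q \<in> Fcube u S" "torus_pt G p = torus_pt G q" by (auto simp: cell_def)
  then obtain lam where lam: "\<forall>i\<in>S. 0 \<le> lam i \<and> lam i \<le> 1"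
    "q = (\<lambda>i. of_int (u i) + (if i \<in> S then lam i else 0))" by (auto simp: Fcube_def)
  have "p \<in> torus_pt G q" using q self_in_torus by metis
  then obtain m where m: "m \<in> kerM G" "p = (\<lambda>i. q i + of_int (m i))" by (auto simp: torus_pt_def)
  have eq: "of_int (u' i) + (if i \<in> S' then (1/2::real) else 0)
            = of_int (u i) + (if i \<in> S then lam i else 0) + of_int (m i)" for i
    using fun_cong[OF m(2), of i] lam(2) by (simp add: p_def)
  have sub: "S' \<subseteq> S"
  proof
    fix i assume iS': "i \<in> S'"
    show "i \<in> S"
    proof (rule ccontr)
      assume "i \<notin> S"
      with eq[of i] iS' have "of_int (u' i) + (1/2::real) = of_int (u i + m i)" by simp
      hence "(1/2::real) = of_int (u i + m i - u' i)" by simp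
      hence "2 * of_int (u i + m i - u' i) = (1::real)" by simp
      hence "2 * (u i + m i - u' i) = 1" by linarith
      thus False by presburger
    qed
  qed
  moreover have "(\<lambda>i. u' i - u i) \<in> kerM G" if "S = S'"
  proof -
    have "u' i - u i = m i" for i
    proof (cases "i \<in> S")
      case True
      with eq[of i] that have e: "of_int (u' i - u i - m i) = lam i - (1/2::real)" by simp
      have "-1/2 \<le> lam i - (1/2::real)" "lam i - 1/2 \<le> (1/2::real)" using lam(1) True by auto
      with e have "-1/2 \<le> (of_int (u' i - u i - m i)::real)" "(of_int (u' i - u i - m i)::real) \<le> 1/2"
        by auto
      hence "u' i - u i - m i = 0" by linarith
      thus ?thesis by simp
    next
      case False
      with eq[of i] that have "of_int (u' i) = (of_int (u i + m i) :: real)" by simp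
      thus ?thesis by linarith
    qed
    hence "(\<lambda>i. u' i - u i) = m" by auto
    thus ?thesis using m by simp
  qed
  ultimately show ?thesis by blast
qed

lemma cell_inj:
  assumes "cell G u S = cell G u' S'"
  shows "S = S'" "(\<lambda>i. u' i - u i) \<in> kerM G"
  using half_lemma[OF assms] half_lemma[OF assms[symmetric]] by auto

lemma rep_cell:
  assumes "\<eta> = cell G u S"
  shows "\<eta> = cell G (fst (rep G \<eta>)) (snd (rep G \<eta>))"
  unfolding rep_def using assms someI[of "\<lambda>p. \<eta> = cell G (fst p) (snd p)" "(u,S)"] by simp

lemma rep_props:
  assumes "\<eta> = cell G u S"
  shows "snd (rep G \<eta>) = S" "(\<lambda>i. fst (rep G \<eta>) i - u i) \<in> kerM G"
  using cell_inj[OF trans[OF assms[symmetric] rep_cell[OF assms]]] by auto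

lemma tail_cell:
  assumes "diag_group G"
  shows "tail G (cell G u S) = deg G u"
  using rep_props[OF refl, of G u S] deg_eq_ker[OF assms] by (simp add: tail_def)

lemma head_cell:
  assumes "diag_group G"
  shows "head G (cell G u S) = deg G (\<lambda>i. u i + chiS S i)"
proof -
  have "(\<lambda>i. (fst (rep G (cell G u S)) i + chiS S i) - (u i + chiS S i)) \<in> kerM G"
    using rep_props(2)[OF refl, of G u S] by simp
  thus ?thesis using rep_props(1)[OF refl, of G u S] deg_eq_ker[OF assms] by (simp add: head_def)
qed

lemma cdiv_cell: "cdiv G (cell G u S) = chiS S"
  using rep_props(1)[OF refl, of G u S] by (simp add: cdiv_def)

lemma chiS_inj: "chiS S = chiS S' \<Longrightarrow> S = S'"
  unfolding chiS_def by (metis (full_types) one_neq_zero subsetI subset_antisym)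

lemma chiS_compl: "(\<lambda>i. 1 - chiS S i) = chiS (- S)"
  by (auto simp: chiS_def)

lemma uniq:
  assumes "diag_group G" "\<eta>'' \<in> Delta G" "tail G \<eta>'' = deg G (\<lambda>i. u i + chiS S i)"
    "cdiv G \<eta>'' = chiS (- S)"
  shows "\<eta>'' = cell G (\<lambda>i. u i + chiS S i) (- S)"
proof -
  obtain u'' S'' where e: "\<eta>'' = cell G u'' S''" using assms(2) by (auto simp: Delta_def)
  have S: "S'' = - S" using assms(4) e cdiv_cell chiS_inj by metis
  have k: "(\<lambda>i. u'' i - (u i + chiS S i)) \<in> kerM G"
    using assms(3) e tail_cell[OF assms(1)] deg_eq_ker[OF assms(1)] by metis
  have "cell G u'' S'' = cell G (\<lambda>i. (u i + chiS S i) + (u'' i - (u i + chiS S i))) S''" by simp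
  also have "\<dots> = cell G (\<lambda>i. u i + chiS S i) S''" by (rule cell_shift[OF assms(1) k])
  finally show ?thesis using e S by simp
qed

lemma ones_ker:
  assumes "in_SL G" shows "(\<lambda>i. 1) \<in> kerM G"
  using assms by (simp add: kerM_iff pp_def in_SL_def)

lemma partner:
  assumes "diag_group G" "in_SL G"
  shows "tail G (cell G (\<lambda>i. u i + chiS S i) (- S)) = head G (cell G u S)"
    "head G (cell G (\<lambda>i. u i + chiS S i) (- S)) = tail G (cell G u S)"
    "cdiv G (cell G (\<lambda>i. u i + chiS S i) (- S)) = (\<lambda>i. 1 - cdiv G (cell G u S) i)"
proof -
  show "tail G (cell G (\<lambda>i. u i + chiS S i) (- S)) = head G (cell G u S)"
    by (simp add: tail_cell head_cell assms)
  have "(\<lambda>i. (u i + chiS S i + chiS (- S) i) - u i) = (\<lambda>i. 1)"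
    by (auto simp: chiS_def)
  hence "deg G (\<lambda>i. u i + chiS S i + chiS (- S) i) = deg G u"
    using deg_eq_ker[OF assms(1)] ones_ker[OF assms(2)] by metis
  thus "head G (cell G (\<lambda>i. u i + chiS S i) (- S)) = tail G (cell G u S)"
    by (simp add: tail_cell head_cell assms)
  show "cdiv G (cell G (\<lambda>i. u i + chiS S i) (- S)) = (\<lambda>i. 1 - cdiv G (cell G u S) i)"
    by (simp add: cdiv_cell chiS_compl)
qed

lemma tau_cell:
  assumes "diag_group G" "in_SL G"
  shows "tau G (cell G u S) = cell G (\<lambda>i. u i + chiS S i) (- S)"
  unfolding tau_def
proof (rule the_equality)
  show "cell G (\<lambda>i. u i + chiS S i) (- S) \<in> Delta G \<and>
    tail G (cell G (\<lambda>i. u i + chiS S i) (- S)) = head G (cell G u S) \<and>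
    head G (cell G (\<lambda>i. u i + chiS S i) (- S)) = tail G (cell G u S) \<and>
    cdiv G (cell G (\<lambda>i. u i + chiS S i) (- S)) = (\<lambda>i. 1 - cdiv G (cell G u S) i)"
    using partner[OF assms] by (auto simp: Delta_def)
next
  fix e assume "e \<in> Delta G \<and> tail G e = head G (cell G u S) \<and> head G e = tail G (cell G u S) \<and>
         cdiv G e = (\<lambda>i. 1 - cdiv G (cell G u S) i)"
  thus "e = cell G (\<lambda>i. u i + chiS S i) (- S)"
    using uniq[OF assms(1)] by (simp add: head_cell cdiv_cell chiS_compl assms)
qed

theorem proposition4p6:
  fixes G :: "('n::finite \<Rightarrow> 'k::alg_closed_field) set"
  assumes "diag_group G"
    and "in_SL G"
    and "of_nat (card G) \<noteq> (0::'k)"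
  shows "(\<forall>k. \<forall>\<eta>\<in>Delta_k G k. \<exists>!\<eta>'. \<eta>' \<in> Delta_k G (card (UNIV :: 'n set) - k)
            \<and> tail G \<eta>' = head G \<eta> \<and> head G \<eta>' = tail G \<eta>
            \<and> cdiv G \<eta>' = (\<lambda>i. 1 - cdiv G \<eta> i))
       \<and> (\<forall>\<eta>\<in>Delta G. tau G \<eta> \<in> Delta G \<and> tau G (tau G \<eta>) = \<eta>)"
proof (intro conjI allI ballI)
  fix k \<eta> assume "\<eta> \<in> Delta_k G k"
  then obtain u S where e: "\<eta> = cell G u S" "card S = k" by (auto simp: Delta_k_def)
  show "\<exists>!\<eta>'. \<eta>' \<in> Delta_k G (card (UNIV :: 'n set) - k)
            \<and> tail G \<eta>' = head G \<eta> \<and> head G \<eta>' = tail G \<eta>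
            \<and> cdiv G \<eta>' = (\<lambda>i. 1 - cdiv G \<eta> i)"
  proof (rule ex1I[of _ "cell G (\<lambda>i. u i + chiS S i) (- S)"])
    have "card (- S) = card (UNIV :: 'n set) - k" using e(2) by (simp add: Compl_eq_Diff_UNIV card_Diff_subset)
    hence "cell G (\<lambda>i. u i + chiS S i) (- S) \<in> Delta_k G (card (UNIV :: 'n set) - k)"
      by (auto simp: Delta_k_def)
    thus "cell G (\<lambda>i. u i + chiS S i) (- S) \<in> Delta_k G (card (UNIV :: 'n set) - k)
            \<and> tail G (cell G (\<lambda>i. u i + chiS S i) (- S)) = head G \<eta>
            \<and> head G (cell G (\<lambda>i. u i + chiS S i) (- S)) = tail G \<eta>
            \<and> cdiv G (cell G (\<lambda>i. u i + chiS S i) (- S)) = (\<lambda>i. 1 - cdiv G \<eta> i)"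
      using partner[OF assms(1,2)] e by simp
  next
    fix e' assume h: "e' \<in> Delta_k G (card (UNIV :: 'n set) - k)
            \<and> tail G e' = head G \<eta> \<and> head G e' = tail G \<eta>
            \<and> cdiv G e' = (\<lambda>i. 1 - cdiv G \<eta> i)"
    hence "e' \<in> Delta G" by (auto simp: Delta_k_def Delta_def)
    thus "e' = cell G (\<lambda>i. u i + chiS S i) (- S)"
      using uniq[OF assms(1)] h e by (simp add: head_cell cdiv_cell chiS_compl assms)
  qed
next
  fix \<eta> assume "\<eta> \<in> Delta G"
  then obtain u S where e: "\<eta> = cell G u S" by (auto simp: Delta_def)
  show "tau G \<eta> \<in> Delta G" using e tau_cell[OF assms(1,2)] by (auto simp: Delta_def)
  have "tau G (tau G \<eta>) = cell G (\<lambda>i. (u i + chiS S i) + chiS (- S) i) (- (- S))"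
    using e tau_cell[OF assms(1,2)] by simp
  also have "(\<lambda>i. (u i + chiS S i) + chiS (- S) i) = (\<lambda>i. u i + 1)"
    by (auto simp: chiS_def)
  also have "cell G (\<lambda>i. u i + 1) (- (- S)) = cell G u S"
    using cell_shift[OF assms(1) ones_ker[OF assms(2)]] by simp
  finally show "tau G (tau G \<eta>) = \<eta>" using e by simp
qed

end
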